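(* Let $\pi$ be the cyclic permutation of $\{1,\dots,6\}$ given by $1\mapsto2\mapsto4\mapsto5\mapsto3\mapsto6\mapsto1$. Then $\pi$ is a unimodal pattern with over-rotation pair $(2,6)$, its code is non-decreasing, $r_\pi=\rho(\pi)=\frac13$, and $\pi$ has no block structure over an over-twist pattern of over-rotation number $\frac13$; that is, $\pi$ is very badly ordered.
   Context: A cyclic pattern is a cyclic permutation of $\{1,\dots,n\}$ viewed as a cycle $P$ on the line; the $P$-linear map $f$ agrees with the cycle on $P$ and is affine in between; the pattern is unimodal if $f$ has exactly one turning point, a local maximum. Over-rotation pair: $2p$ is the number of $x\in P$ with $f(x)-x$ and $f^2(x)-f(x)$ of different signs, $q$ the period, $\rho(\pi)=p/q$. $r_\pi$ is the left endpoint of the over-rotation interval $[r_\pi,\frac12]$ of $f$ (closure of the set of over-rotation numbers of non-fixed periodic orbits of $f$). For the unique fixed point $a$ of $f$, write $x>_a y$ if $x<y<a$ or $x>y>a$; code: $L(x_0)=0$ at the leftmost point and $L(f(y))=L(y)+\rho(\pi)-\varphi(y)$ with $\varphi(y)=1$ if $y>a$ and $f(y)<a$, else $0$; non-decreasing means $x>_a y\Rightarrow L(x)\le L(y)$. A pattern $A$ forces $B$ if every continuous interval map with a cycle of pattern $A$ has one of pattern $B$; an over-twist is a forcing-minimal pattern among patterns of a given over-rotation number. A permutation $\pi$ of $\{1,\dots,n\}$ has block structure over a pattern $\pi'$ if there are pairwise disjoint segments $I_0,\dots,I_k$ ($k\ge1$) with $\pi(T_n\cap I_j)=T_n\cap I_{j+1}$,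 $\pi(T_n\cap I_k)=T_n\cap I_0$, $T_n=\{1,\dots,n\}$, and $\pi'$ is the pattern obtained by collapsing each block $T_n\cap I_j$ to a point. A pattern is very badly ordered if its over-rotation number equals the left endpoint of its forced over-rotation interval while it has no block structure over an over-twist pattern of the same over-rotation number. *)

theory Defs
  imports "HOL-Analysis.Analysis"
begin

definition cyclic_pattern :: "nat \<Rightarrow> (nat \<Rightarrow> nat) \<Rightarrow> bool" where
  "cyclic_pattern n pp \<longleftrightarrow> 1 \<le> n \<and> bij_betw pp {1..n} {1..n} \<and>
     (\<forall>i. i \<notin> {1..n} \<longrightarrow> pp i = i) \<and> {(pp ^^ k) 1 | k. True} = {1..n}"

definition plin :: "nat \<Rightarrow> (nat \<Rightarrow> nat) \<Rightarrow> real \<Rightarrow> real" where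
  "plin n pp x =
     (if x \<le> 1 then real (pp 1)
      else if x \<ge> real n then real (pp n)
      else (let i = nat \<lfloor>x\<rfloor> in
              real (pp i) + (x - real i) * (real (pp (Suc i)) - real (pp i))))"

definition turning_point :: "nat \<Rightarrow> (real \<Rightarrow> real) \<Rightarrow> real \<Rightarrow> bool" where
  "turning_point n f x \<longleftrightarrow> 1 < x \<and> x < real n \<and>
     \<not> (\<exists>e>0. (\<forall>y\<in>{x-e<..<x+e}. \<forall>z\<in>{x-e<..<x+e}. y < z \<longrightarrow> f y < f z) \<or>
               (\<forall>y\<in>{x-e<..<x+e}. \<forall>z\<in>{x-e<..<x+e}. y < z \<longrightarrow> f y > f z))"

definition local_max :: "(real \<Rightarrow> real) \<Rightarrow> real \<Rightarrow> bool" where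
  "local_max f x \<longleftrightarrow> (\<exists>e>0. \<forall>y\<in>{x-e<..<x+e}. f y \<le> f x)"

definition unimodal :: "nat \<Rightarrow> (nat \<Rightarrow> nat) \<Rightarrow> bool" where
  "unimodal n pp \<longleftrightarrow> cyclic_pattern n pp \<and>
     (\<exists>!x. turning_point n (plin n pp) x) \<and>
     (\<forall>x. turning_point n (plin n pp) x \<longrightarrow> local_max (plin n pp) x)"

definition sign_changes :: "nat \<Rightarrow> (nat \<Rightarrow> nat) \<Rightarrow> nat" where
  "sign_changes n pp = card {i \<in> {1..n}.
      (real (pp i) - real i) * (real (pp (pp i)) - real (pp i)) < 0}"

definition over_rotation_pair :: "nat \<Rightarrow> (nat \<Rightarrow> nat) \<Rightarrow> nat \<Rightarrow> nat \<Rightarrow> bool" where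
  "over_rotation_pair n pp p q \<longleftrightarrow> 2 * p = sign_changes n pp \<and> q = n"

definition orho :: "nat \<Rightarrow> (nat \<Rightarrow> nat) \<Rightarrow> real" where
  "orho n pp = real (sign_changes n pp) / (2 * real n)"

definition periodic_orbit :: "(real \<Rightarrow> real) \<Rightarrow> real set \<Rightarrow> bool" where
  "periodic_orbit f P \<longleftrightarrow> (\<exists>x q. 0 < q \<and> (f ^^ q) x = x \<and> P = {(f ^^ k) x | k. k < q})"

definition orho_orbit :: "(real \<Rightarrow> real) \<Rightarrow> real set \<Rightarrow> real" where
  "orho_orbit f P = real (card {x \<in> P. (f x - x) * (f (f x) - f x) < 0}) / (2 * real (card P))"

definition over_rotation_interval :: "nat \<Rightarrow> (nat \<Rightarrow> nat) \<Rightarrow> real set" where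
  "over_rotation_interval n pp = closure
     {orho_orbit (plin n pp) P | P. periodic_orbit (plin n pp) P \<and> P \<subseteq> {1..real n}
                                    \<and> 2 \<le> card P}"

definition r_pat :: "nat \<Rightarrow> (nat \<Rightarrow> nat) \<Rightarrow> real" where
  "r_pat n pp = Inf (over_rotation_interval n pp)"

definition fixpt :: "nat \<Rightarrow> (nat \<Rightarrow> nat) \<Rightarrow> real" where
  "fixpt n pp = (THE a. 1 \<le> a \<and> a \<le> real n \<and> plin n pp a = a)"

definition phi :: "nat \<Rightarrow> (nat \<Rightarrow> nat) \<Rightarrow> nat \<Rightarrow> real" where
  "phi n pp y = (if real y > fixpt n pp \<and> real (pp y) < fixpt n pp then 1 else 0)"

text \<open>L(x_0) = 0 at the leftmost point 1 and L(f y) = L y + rho - phi y, i.e.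
  L(pp^m 1) = m rho - sum_{i<m} phi(pp^i 1) for m < n.\<close>
definition code :: "nat \<Rightarrow> (nat \<Rightarrow> nat) \<Rightarrow> nat \<Rightarrow> real" where
  "code n pp y = (let m = (THE m. m < n \<and> (pp ^^ m) 1 = y) in
      real m * orho n pp - (\<Sum>i<m. phi n pp ((pp ^^ i) 1)))"

definition a_greater :: "real \<Rightarrow> real \<Rightarrow> real \<Rightarrow> bool" where
  "a_greater a x y \<longleftrightarrow> (x < y \<and> y < a) \<or> (x > y \<and> y > a)"

definition code_nondecreasing :: "nat \<Rightarrow> (nat \<Rightarrow> nat) \<Rightarrow> bool" where
  "code_nondecreasing n pp \<longleftrightarrow>
     (\<forall>x\<in>{1..n}. \<forall>y\<in>{1..n}. a_greater (fixpt n pp) (real x) (real y) \<longrightarrow>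
        code n pp x \<le> code n pp y)"

definition has_cycle_pattern :: "real \<Rightarrow> real \<Rightarrow> (real \<Rightarrow> real) \<Rightarrow> nat \<Rightarrow> (nat \<Rightarrow> nat) \<Rightarrow> bool" where
  "has_cycle_pattern a b f n pp \<longleftrightarrow>
     (\<exists>e :: nat \<Rightarrow> real. strict_mono_on {1..n} e \<and>
        (\<forall>i\<in>{1..n}. e i \<in> {a..b} \<and> f (e i) = e (pp i)))"

definition forces :: "nat \<Rightarrow> (nat \<Rightarrow> nat) \<Rightarrow> nat \<Rightarrow> (nat \<Rightarrow> nat) \<Rightarrow> bool" where
  "forces n A m B \<longleftrightarrow>
     (\<forall>(a::real) b f. a \<le> b \<longrightarrow> continuous_on {a..b} f \<longrightarrow> f ` {a..b} \<subseteq> {a..b} \<longrightarrow>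
        has_cycle_pattern a b f n A \<longrightarrow> has_cycle_pattern a b f m B)"

definition over_twist :: "nat \<Rightarrow> (nat \<Rightarrow> nat) \<Rightarrow> bool" where
  "over_twist n A \<longleftrightarrow> cyclic_pattern n A \<and> 2 \<le> n \<and>
     (\<forall>m B. cyclic_pattern m B \<and> 2 \<le> m \<and> orho m B = orho n A \<and> forces n A m B
            \<longrightarrow> m = n \<and> B = A)"

text \<open>Block structure with blocks T_n \<inter> I_j, j = 0..k, I_j = [lo j, hi j] pairwise disjoint;
  sg (a pattern on {1..k+1}) is obtained by collapsing blocks: r j is the position of
  block j from the left.\<close>
definition block_structure :: "nat \<Rightarrow> (nat \<Rightarrow> nat) \<Rightarrow> nat \<Rightarrow> (nat \<Rightarrow> nat) \<Rightarrow> bool" where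
  "block_structure n pp k sg \<longleftrightarrow> 1 \<le> k \<and>
     (\<exists>lo hi :: nat \<Rightarrow> real.
        let B = (\<lambda>j. {i \<in> {1..n}. lo j \<le> real i \<and> real i \<le> hi j}) in
        (\<forall>j\<le>k. lo j \<le> hi j \<and> B j \<noteq> {}) \<and>
        (\<forall>j\<le>k. \<forall>j'\<le>k. j \<noteq> j' \<longrightarrow> {lo j..hi j} \<inter> {lo j'..hi j'} = {}) \<and>
        (\<forall>j<k. pp ` B j = B (Suc j)) \<and> pp ` B k = B 0 \<and>
        cyclic_pattern (k + 1) sg \<and>
        (\<exists>r. bij_betw r {0..k} {1..k+1} \<and>
             (\<forall>j\<le>k. \<forall>j'\<le>k. r j < r j' \<longleftrightarrow> hi j < lo j') \<and>
             (\<forall>j\<le>k. sg (r j) = r (if j = k then 0 else Suc j))))"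

definition very_badly_ordered :: "nat \<Rightarrow> (nat \<Rightarrow> nat) \<Rightarrow> bool" where
  "very_badly_ordered n pp \<longleftrightarrow> orho n pp = r_pat n pp \<and>
     \<not> (\<exists>k sg. block_structure n pp k sg \<and> over_twist (k + 1) sg \<and>
                  orho (k + 1) sg = orho n pp)"

definition pi6 :: "nat \<Rightarrow> nat" where
  "pi6 i = (if i = 1 then 2 else if i = 2 then 4 else if i = 4 then 5 else
            if i = 5 then 3 else if i = 3 then 6 else if i = 6 then 1 else i)"

end

theory Submission
  imports Defs
begin

lemma cover_up:
  fixes f :: "real \<Rightarrow> real"
  assumes uv: "u \<le> v" and cf: "continuous_on {u..v} f" and cd: "c \<le> d"
    and fu: "f u \<le> c" and fv: "d \<le> f v"
  shows "\<exists>u' v'. u \<le> u' \<and> u' \<le> v' \<and> v' \<le> v \<and> f ` {u'..v'} \<subseteq> {c..d} \<and> f u' = c \<and> f v' = d"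
proof -
  define S where "S = {u..v} \<inter> f -` {d..}"
  have "closed S" unfolding S_def by (rule continuous_closed_preimage[OF cf]) auto
  moreover have "bounded S" unfolding S_def by (rule bounded_subset[of "{u..v}"]) auto
  ultimately have "compact S" by (simp add: compact_eq_bounded_closed)
  moreover have "v \<in> S" using uv fv by (auto simp: S_def)
  ultimately obtain v' where v'S: "v' \<in> S" and v'min: "\<forall>t\<in>S. v' \<le> t"
    using compact_attains_inf by blast
  have v'r: "u \<le> v'" "v' \<le> v" "d \<le> f v'" using v'S by (auto simp: S_def)
  have cf': "continuous_on {u..v'} f" using cf v'r by (auto intro: continuous_on_subset)
  have fv': "f v' = d"
  proof (rule ccontr)
    assume "f v' \<noteq> d"
    hence "d < f v'" using v'r by auto
    then obtain t where t: "u \<le> t" "t \<le> v'" "f t = d"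
      using IVT'[of f u d v'] fu cd v'r cf' by force
    hence "t \<in> S" using v'r by (auto simp: S_def)
    hence "v' \<le> t" using v'min by auto
    thus False using t \<open>f v' \<noteq> d\<close> by auto
  qed
  define T where "T = {u..v'} \<inter> f -` {..c}"
  have "closed T" unfolding T_def by (rule continuous_closed_preimage[OF cf']) auto
  moreover have "bounded T" unfolding T_def by (rule bounded_subset[of "{u..v'}"]) auto
  ultimately have "compact T" by (simp add: compact_eq_bounded_closed)
  moreover have "u \<in> T" using v'r fu by (auto simp: T_def)
  ultimately obtain u' where u'T: "u' \<in> T" and u'max: "\<forall>t\<in>T. t \<le> u'"
    using compact_attains_sup by blast
  have u'r: "u \<le> u'" "u' \<le> v'" "f u' \<le> c" using u'T by (auto simp: T_def)
  have cf'': "continuous_on {u'..v'} f" using cf v'r u'r by (auto intro: continuous_on_subset)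
  have fu': "f u' = c"
  proof (rule ccontr)
    assume "f u' \<noteq> c"
    then obtain t where t: "u' \<le> t" "t \<le> v'" "f t = c"
      using IVT'[of f u' c v'] u'r cd fv' cf'' by force
    hence "t \<in> T" using u'r by (auto simp: T_def)
    hence "t \<le> u'" using u'max by auto
    thus False using t \<open>f u' \<noteq> c\<close> by auto
  qed
  have "f ` {u'..v'} \<subseteq> {c..d}"
  proof
    fix y assume "y \<in> f ` {u'..v'}"
    then obtain t where t: "u' \<le> t" "t \<le> v'" "y = f t" by auto
    have "c \<le> f t"
    proof (rule ccontr)
      assume "\<not> c \<le> f t"
      hence "t \<in> T" using t u'r by (auto simp: T_def)
      hence "t = u'" using u'max t by auto
      thus False using fu' \<open>\<not> c \<le> f t\<close> by auto
    qed
    moreover have "f t \<le> d"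
    proof (rule ccontr)
      assume "\<not> f t \<le> d"
      hence "t \<in> S" using t u'r v'r by (auto simp: S_def)
      hence "t = v'" using v'min t by auto
      thus False using fv' \<open>\<not> f t \<le> d\<close> by auto
    qed
    ultimately show "y \<in> {c..d}" using t by auto
  qed
  thus ?thesis using u'r v'r fu' fv' by blast
qed

lemma cover:
  fixes f :: "real \<Rightarrow> real"
  assumes uv: "u \<le> v" and cf: "continuous_on {u..v} f" and cd: "c \<le> d"
    and h: "(f u \<le> c \<and> d \<le> f v) \<or> (f v \<le> c \<and> d \<le> f u)"
  shows "\<exists>u' v'. u \<le> u' \<and> u' \<le> v' \<and> v' \<le> v \<and> f ` {u'..v'} \<subseteq> {c..d} \<and>
     ((f u' = c \<and> f v' = d) \<or> (f u' = d \<and> f v' = c))"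
  using h
proof
  assume "f u \<le> c \<and> d \<le> f v"
  thus ?thesis using cover_up[OF uv cf cd] by blast
next
  assume a: "f v \<le> c \<and> d \<le> f u"
  have "continuous_on {u..v} (\<lambda>t. - f t)" using cf by (intro continuous_intros)
  from cover_up[OF uv this, of "-d" "-c"] a cd
  obtain u' v' where "u \<le> u'" "u' \<le> v'" "v' \<le> v" "(\<lambda>t. - f t) ` {u'..v'} \<subseteq> {-d..-c}"
    "- f u' = -d" "- f v' = - c" by auto
  moreover hence "f ` {u'..v'} \<subseteq> {c..d}" by force
  ultimately show ?thesis by auto
qed

declare One_nat_def[simp del]

definition F :: "real \<Rightarrow> real" where
  "F x = (if x \<le> 3 then 2*x else if x \<le> 4 then 9 - x else 13 - 2*x)"

lemma pi6_simps[simp]: "pi6 1 = 2" "pi6 2 = 4" "pi6 3 = 6" "pi6 4 = 5" "pi6 5 = 3" "pi6 6 = 1" "pi6 (Suc 0) = 2" "pi6 (Suc (Suc 0)) = 4"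
  by (simp_all add: pi6_def)

lemma plin_F: assumes "1 \<le> x" "x \<le> 6" shows "plin 6 pi6 x = F x"
proof -
  consider "x \<le> 1" | "x \<ge> 6" | "1 < x" "x < 6" by linarith
  then show ?thesis
  proof cases
    case 1 thus ?thesis using assms by (simp add: plin_def F_def)
  next
    case 2 thus ?thesis using assms by (simp add: plin_def F_def)
  next
    case 3
    define i where "i = nat \<lfloor>x\<rfloor>"
    have fl: "\<lfloor>x\<rfloor> \<ge> 1" "\<lfloor>x\<rfloor> \<le> 5" using 3 by (auto simp: le_floor_iff floor_le_iff)
    have ix: "real i \<le> x" "x < real i + 1" using fl unfolding i_def by (auto simp: of_nat_nat)
    have "int i \<ge> 1" "int i \<le> 5" using fl unfolding i_def by auto
    hence "i = 1 \<or> i = 2 \<or> i = 3 \<or> i = 4 \<or> i = 5" by auto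
    moreover have "plin 6 pi6 x = real (pi6 i) + (x - real i) * (real (pi6 (Suc i)) - real (pi6 i))"
      using 3 by (simp add: plin_def i_def Let_def)
    ultimately show ?thesis using ix by (elim disjE) (auto simp: F_def algebra_simps)
  qed
qed

lemma six: "{1..6::nat} = {1,2,3,4,5,6}" by auto

lemma funpow_num: "(f ^^ numeral k) x = f ((f ^^ pred_numeral k) x)"
  by (simp add: numeral_eq_Suc)

lemma funpow_one: "((f::'a\<Rightarrow>'a) ^^ (1::nat)) x = f x" by (simp add: One_nat_def)

lemma iter1: "(pi6^^0) 1 = 1" "(pi6^^1) 1 = 2" "(pi6^^2) 1 = 4" "(pi6^^3) 1 = 5"
  "(pi6^^4) 1 = 3" "(pi6^^5) 1 = 6" "(pi6^^6) 1 = 1"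
  by (simp_all add: funpow_num funpow_one)

lemma pi6_in': "i \<in> {1,2,3,4,5,6} \<Longrightarrow> pi6 i \<in> {1,2,3,4,5,6::nat}"
  by auto

lemma pi6_in: "i \<in> {1..6} \<Longrightarrow> pi6 i \<in> {1..6}"
  unfolding six by (rule pi6_in')

lemma cyc6: "cyclic_pattern 6 pi6"
proof -
  have "bij_betw pi6 {1..6} {1..6}"
    unfolding bij_betw_def six by (auto simp: inj_on_def)
  moreover have "\<forall>i. i \<notin> {1..6} \<longrightarrow> pi6 i = i" by (auto simp: pi6_def)
  moreover have "\<And>k. (pi6^^k) 1 \<in> {1..6}"
  proof -
    fix k show "(pi6^^k) 1 \<in> {1..6}" unfolding six by (induction k) (auto intro!: pi6_in' simp del: insert_iff)
  qed
  hence "{(pi6 ^^ k) 1 | k. True} = {1..6}"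
    apply (auto simp del: atLeastAtMost_iff)
    apply (simp only: six)
    using iter1 by (metis insertE singletonD empty_iff)
  ultimately show ?thesis by (simp add: cyclic_pattern_def)
qed

lemma sc6: "sign_changes 6 pi6 = 4"
proof -
  have "{i \<in> {1..6}. (real (pi6 i) - real i) * (real (pi6 (pi6 i)) - real (pi6 i)) < 0} = {3,4,5,6}"
    unfolding six by auto
  thus ?thesis by (simp add: sign_changes_def)
qed

lemma orho6: "orho 6 pi6 = 1/3"
  by (simp add: orho_def sc6)

lemma orp: "over_rotation_pair 6 pi6 2 6"
  by (simp add: over_rotation_pair_def sc6)

lemma fixpt6: "fixpt 6 pi6 = 13/3"
  unfolding fixpt_def
proof (rule the_equality)
  show "1 \<le> (13/3::real) \<and> 13/3 \<le> real 6 \<and> plin 6 pi6 (13/3) = 13/3"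
    by (simp add: plin_F F_def)
next
  fix a assume "1 \<le> a \<and> a \<le> real 6 \<and> plin 6 pi6 a = a"
  thus "a = 13/3" by (auto simp: plin_F F_def split: if_splits)
qed

lemma phi6: "phi 6 pi6 1 = 0" "phi 6 pi6 2 = 0" "phi 6 pi6 3 = 0" "phi 6 pi6 4 = 0"
   "phi 6 pi6 5 = 1" "phi 6 pi6 6 = 1"
  by (simp_all add: phi_def fixpt6)

lemma theM: assumes "m0 < 6" "(pi6^^m0) 1 = y"
  shows "(THE m. m < 6 \<and> (pi6^^m) 1 = y) = m0"
proof (rule the_equality)
  show "m0 < 6 \<and> (pi6^^m0) 1 = y" using assms by auto
next
  fix m assume "m < 6 \<and> (pi6^^m) 1 = y"
  hence "m < 6" "(pi6^^m) 1 = (pi6^^m0) 1" using assms by auto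
  moreover have "m \<in> {0,1,2,3,4,5}" "m0 \<in> {0,1,2,3,4,5}" using \<open>m < 6\<close> assms by auto
  ultimately show "m = m0" using iter1 by auto
qed

lemma m_vals: "(THE m. m < 6 \<and> (pi6^^m) 1 = 1) = 0" "(THE m. m < 6 \<and> (pi6^^m) 1 = 2) = 1"
  "(THE m. m < 6 \<and> (pi6^^m) 1 = 4) = 2" "(THE m. m < 6 \<and> (pi6^^m) 1 = 5) = 3"
  "(THE m. m < 6 \<and> (pi6^^m) 1 = 3) = 4" "(THE m. m < 6 \<and> (pi6^^m) 1 = 6) = 5"
  by (rule theM; simp add: iter1)+

lemma code6: "code 6 pi6 1 = 0" "code 6 pi6 2 = 1/3" "code 6 pi6 3 = 1/3"
  "code 6 pi6 4 = 2/3" "code 6 pi6 5 = 1" "code 6 pi6 6 = 2/3"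
  unfolding code_def Let_def m_vals
  by (simp_all add: orho6 lessThan_nat_numeral iter1 phi6)

lemma codend: "code_nondecreasing 6 pi6"
  unfolding code_nondecreasing_def fixpt6 six
  by (auto simp: a_greater_def code6)

abbreviation "f6 \<equiv> plin 6 pi6"

lemma tp_not: assumes "1 < x" "x < 6" "x \<noteq> 3" shows "\<not> turning_point 6 f6 x"
proof -
  consider "x < 3" | "x > 3" using assms by linarith
  thus ?thesis
  proof cases
    case 1
    define e where "e = min (x - 1) (3 - x)"
    have "e > 0" using 1 assms by (simp add: e_def)
    moreover have "\<forall>y\<in>{x-e<..<x+e}. \<forall>z\<in>{x-e<..<x+e}. y < z \<longrightarrow> f6 y < f6 z"
      using 1 assms by (auto simp: e_def plin_F F_def)
    ultimately show ?thesis unfolding turning_point_def by blast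
  next
    case 2
    define e where "e = min (x - 3) (6 - x)"
    have "e > 0" using 2 assms by (simp add: e_def)
    moreover have "\<forall>y\<in>{x-e<..<x+e}. \<forall>z\<in>{x-e<..<x+e}. y < z \<longrightarrow> f6 y > f6 z"
      using 2 assms by (auto simp: e_def plin_F F_def)
    ultimately show ?thesis unfolding turning_point_def by blast
  qed
qed

lemma tp3: "turning_point 6 f6 3"
  unfolding turning_point_def
proof (intro conjI notI)
  show "1 < (3::real)" "3 < real 6" by auto
next
  assume "\<exists>e>0. (\<forall>y\<in>{3-e<..<3+e}. \<forall>z\<in>{3-e<..<3+e}. y < z \<longrightarrow> f6 y < f6 z) \<or>
               (\<forall>y\<in>{3-e<..<3+e}. \<forall>z\<in>{3-e<..<3+e}. y < z \<longrightarrow> f6 y > f6 z)"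
  then obtain e where e: "e > 0" and h: "(\<forall>y\<in>{3-e<..<3+e}. \<forall>z\<in>{3-e<..<3+e}. y < z \<longrightarrow> f6 y < f6 z) \<or>
               (\<forall>y\<in>{3-e<..<3+e}. \<forall>z\<in>{3-e<..<3+e}. y < z \<longrightarrow> f6 y > f6 z)" by blast
  define d where "d = min (e/2) (1/2)"
  have d: "0 < d" "d < e" "d \<le> 1/2" using e by (auto simp: d_def)
  have v1: "f6 3 = 6" "f6 (3 + d) = 6 - d" "f6 (3 - d) = 6 - 2*d"
    using d by (auto simp: plin_F F_def)
  from h show False
  proof
    assume "\<forall>y\<in>{3-e<..<3+e}. \<forall>z\<in>{3-e<..<3+e}. y < z \<longrightarrow> f6 y < f6 z"
    hence "f6 3 < f6 (3 + d)" using d e by auto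
    thus False using v1 d by auto
  next
    assume "\<forall>y\<in>{3-e<..<3+e}. \<forall>z\<in>{3-e<..<3+e}. y < z \<longrightarrow> f6 y > f6 z"
    hence "f6 (3 - d) > f6 3" using d e by auto
    thus False using v1 d by auto
  qed
qed

lemma lm3: "local_max f6 3"
  unfolding local_max_def
  by (rule exI[of _ 1]) (auto simp: plin_F F_def)

lemma unimodal6: "unimodal 6 pi6"
proof -
  have "x = 3" if t: "turning_point 6 f6 x" for x
  proof -
    have "1 < x" "x < 6" using t by (auto simp: turning_point_def)
    thus "x = 3" using tp_not[of x] t by blast
  qed
  thus ?thesis unfolding unimodal_def using cyc6 tp3 lm3 by blast
qed

definition U :: "real \<Rightarrow> real" where
  "U x = (if x < 2 then 0 else if x < 4 then 2 else if x < 13/3 then 4 else if x \<le> 5 then 3 else 1)"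

definition psi :: "real \<Rightarrow> real" where
  "psi x = (if (f6 x - x) * (f6 (f6 x) - f6 x) < 0 then 1 else 0)"

lemma F_range: "1 \<le> x \<Longrightarrow> x \<le> 6 \<Longrightarrow> 1 \<le> F x \<and> F x \<le> 6"
  by (auto simp: F_def)

lemma key_local:
  assumes "1 \<le> x" "x \<le> 6" "x \<noteq> 13/3" "f6 x \<noteq> 13/3"
  shows "U (f6 x) + 3 * psi x \<ge> U x + 2"
proof -
  have r: "1 \<le> F x" "F x \<le> 6" using F_range assms by auto
  have e1: "f6 x = F x" using assms by (simp add: plin_F)
  have e2: "f6 (F x) = F (F x)" using r by (simp add: plin_F)
  show ?thesis using assms r unfolding psi_def e1 e2
    by (auto simp: F_def U_def mult_less_0_iff split: if_splits)
qed

lemma f6_fix: "f6 (13/3) = 13/3" by (simp add: plin_F F_def)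

lemma fix_iter: "f a = a \<Longrightarrow> (f ^^ n) a = a"
  by (induction n) auto

lemma f6_fix_iter: "(f6 ^^ n) (13/3) = 13/3"
  using fix_iter[of f6 "13/3" n] f6_fix by blast

lemma orbit_bound:
  assumes po: "periodic_orbit f6 P" and sub: "P \<subseteq> {1..6}" and c2: "2 \<le> card P"
  shows "orho_orbit f6 P \<ge> 1/3"
proof -
  obtain x q where q: "0 < q" "(f6 ^^ q) x = x" and P: "P = {(f6 ^^ k) x | k. k < q}"
    using po unfolding periodic_orbit_def by blast
  have Pim: "P = (\<lambda>k. (f6 ^^ k) x) ` {..<q}" using P by auto
  have fin: "finite P" using Pim by simp
  have fP: "f6 ` P = P"
  proof
    show "f6 ` P \<subseteq> P"
    proof
      fix y assume "y \<in> f6 ` P"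
      then obtain k where k: "k < q" "y = f6 ((f6 ^^ k) x)" using P by auto
      hence y: "y = (f6 ^^ Suc k) x" by simp
      show "y \<in> P"
      proof (cases "Suc k < q")
        case True thus ?thesis using y P by blast
      next
        case False hence "Suc k = q" using k by auto
        hence "y = (f6 ^^ 0) x" using y q by simp
        thus ?thesis using P q by blast
      qed
    qed
  next
    show "P \<subseteq> f6 ` P"
    proof
      fix y assume "y \<in> P"
      then obtain k where k: "k < q" "y = (f6 ^^ k) x" using P by auto
      show "y \<in> f6 ` P"
      proof (cases k)
        case 0
        have "y = (f6 ^^ Suc (q - 1)) x" using k 0 q by simp
        hence "y = f6 ((f6 ^^ (q - 1)) x)" by simp
        moreover have "(f6 ^^ (q - 1)) x \<in> P" using P q by auto
        ultimately show ?thesis by blast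
      next
        case (Suc j)
        hence "y = f6 ((f6 ^^ j) x)" using k by simp
        moreover have "(f6 ^^ j) x \<in> P" using P k Suc by auto
        ultimately show ?thesis by blast
      qed
    qed
  qed
  have inj: "inj_on f6 P" using fP fin by (simp add: eq_card_imp_inj_on)
  have na: "13/3 \<notin> P"
  proof
    assume "13/3 \<in> P"
    then obtain j where j: "j < q" "(f6 ^^ j) x = 13/3" using P by auto
    have "x = (f6 ^^ (q - j + j)) x" using q j by simp
    also have "\<dots> = (f6 ^^ (q - j)) ((f6 ^^ j) x)" by (simp add: funpow_add)
    also have "\<dots> = 13/3" by (simp only: j(2) f6_fix_iter)
    finally have x: "x = 13/3" .
    have "P \<subseteq> {13/3}"
    proof
      fix y assume "y \<in> P"
      then obtain k where "y = (f6 ^^ k) x" using P by auto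
      thus "y \<in> {13/3}" by (simp only: x f6_fix_iter singleton_iff)
    qed
    hence "card P \<le> 1" using card_mono[of "{13/3}" P] by auto
    thus False using c2 by auto
  qed
  have loc: "U (f6 y) + 3 * psi y \<ge> U y + 2" if "y \<in> P" for y
  proof -
    have a: "f6 y \<in> P" using fP that by blast
    have b: "y \<noteq> 13/3" using that na by blast
    have c: "f6 y \<noteq> 13/3"
    proof
      assume "f6 y = 13/3"
      hence "13/3 \<in> P" using a by (simp only:)
      thus False using na by (simp only:)
    qed
    have d: "1 \<le> y" "y \<le> 6" using that sub by auto
    show ?thesis by (rule key_local[OF d b c])
  qed
  define Q where "Q = (\<lambda>y. (f6 y - y) * (f6 (f6 y) - f6 y) < 0)"
  have "sum U (f6 ` P) = sum (U \<circ> f6) P" by (rule sum.reindex[OF inj])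
  hence "sum (U \<circ> f6) P = sum U P" by (simp only: fP)
  hence r1: "(\<Sum>y\<in>P. U (f6 y)) = (\<Sum>y\<in>P. U y)" by (simp only: comp_def)
  have r2: "(\<Sum>y\<in>P. U (f6 y) + 3 * psi y) \<ge> (\<Sum>y\<in>P. U y + 2)"
    using loc by (intro sum_mono) auto
  have r3: "(\<Sum>y\<in>P. U (f6 y) + 3 * psi y) = (\<Sum>y\<in>P. U (f6 y)) + 3 * (\<Sum>y\<in>P. psi y)"
    by (simp add: sum.distrib sum_distrib_left)
  have r4: "(\<Sum>y\<in>P. U y + 2) = (\<Sum>y\<in>P. U y) + 2 * real (card P)"
    by (simp add: sum.distrib)
  have r5: "(\<Sum>y\<in>P. psi y) = (\<Sum>y\<in>{y\<in>P. Q y}. 1)"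
    unfolding psi_def Q_def by (rule sum.inter_filter[OF fin, symmetric])
  have r6: "(\<Sum>y\<in>{y\<in>P. Q y}. (1::real)) = real (card {y\<in>P. Q y})" by simp
  have c3: "3 * real (card {y\<in>P. Q y}) \<ge> 2 * real (card P)"
    using r1 r2 r3 r4 r5 r6 by linarith
  have cp: "real (card P) > 0" using c2 by auto
  have "orho_orbit f6 P = real (card {y\<in>P. Q y}) / (2 * real (card P))"
    unfolding orho_orbit_def Q_def by simp
  also have "\<dots> \<ge> 1/3" using c3 cp by (simp add: le_divide_eq)
  finally show ?thesis .
qed

lemma orbit6: "{(f6 ^^ k) 1 | k. k < (6::nat)} = {1,2,3,4,5,6::real}"
proof -
  have v: "f6 1 = 2" "f6 2 = 4" "f6 4 = 5" "f6 5 = 3" "f6 3 = 6" "f6 6 = 1"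
    by (simp_all add: plin_F F_def)
  have "{(f6 ^^ k) 1 | k. k < (6::nat)} = (\<lambda>k. (f6 ^^ k) 1) ` {..<6}" by auto
  also have "\<dots> = {1,2,3,4,5,6}"
  proof -
    have "{..<6::nat} = {0,1,2,3,4,5}" by auto
    thus ?thesis by (simp add: funpow_num funpow_one v) blast
  qed
  finally show ?thesis .
qed

lemma P0_in: "1/3 \<in> {orho_orbit f6 P | P. periodic_orbit f6 P \<and> P \<subseteq> {1..real 6} \<and> 2 \<le> card P}"
proof -
  let ?P = "{1,2,3,4,5,6::real}"
  have v: "f6 1 = 2" "f6 2 = 4" "f6 4 = 5" "f6 5 = 3" "f6 3 = 6" "f6 6 = 1"
    by (simp_all add: plin_F F_def)
  have "(f6 ^^ 6) 1 = 1" by (simp add: funpow_num funpow_one v)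
  hence "periodic_orbit f6 ?P" unfolding periodic_orbit_def using orbit6
    by (intro exI[of _ 1] exI[of _ 6]) auto
  moreover have "?P \<subseteq> {1..real 6}" by auto
  moreover have "card ?P = 6" by simp
  moreover have "{x \<in> ?P. (f6 x - x) * (f6 (f6 x) - f6 x) < 0} = {3,4,5,6}"
    by (auto simp: v)
  hence "orho_orbit f6 ?P = 1/3" unfolding orho_orbit_def by simp
  ultimately have "1/3 = orho_orbit f6 ?P \<and> periodic_orbit f6 ?P \<and> ?P \<subseteq> {1..real 6} \<and> 2 \<le> card ?P"
    by simp
  thus ?thesis by blast
qed

lemma rpat6: "r_pat 6 pi6 = 1/3"
proof -
  define S where "S = {orho_orbit f6 P | P. periodic_orbit f6 P \<and> P \<subseteq> {1..real 6} \<and> 2 \<le> card P}"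
  have "S \<subseteq> {1/3..}"
  proof
    fix t assume "t \<in> S"
    then obtain P where "t = orho_orbit f6 P" "periodic_orbit f6 P" "P \<subseteq> {1..real 6}" "2 \<le> card P"
      unfolding S_def by blast
    thus "t \<in> {1/3..}" using orbit_bound[of P] by simp
  qed
  hence cl: "closure S \<subseteq> {1/3..}" by (rule closure_minimal) (rule closed_atLeast)
  have "1/3 \<in> S" using P0_in unfolding S_def .
  hence m: "1/3 \<in> closure S" using closure_subset by blast
  have "Inf (closure S) = 1/3"
  proof (rule cInf_eq_minimum)
    show "1/3 \<in> closure S" by (rule m)
    fix x assume "x \<in> closure S" thus "1/3 \<le> x" using cl by auto
  qed
  thus ?thesis unfolding r_pat_def over_rotation_interval_def S_def .
qed

declare One_nat_def[simp del]

definition c3 :: "nat \<Rightarrow> nat" where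
  "c3 i = (if i = 1 then 2 else if i = 2 then 3 else if i = 3 then 1 else i)"

lemma c3_simps[simp]: "c3 1 = 2" "c3 2 = 3" "c3 3 = 1" by (simp_all add: c3_def)

lemma three: "{1..3::nat} = {1,2,3}" by auto

lemma c3_in: "i \<in> {1,2,3} \<Longrightarrow> c3 i \<in> {1,2,3::nat}" by auto

lemma cyc3: "cyclic_pattern 3 c3"
proof -
  have bij: "bij_betw c3 {1..3} {1..3}"
    unfolding bij_betw_def three by (auto simp: inj_on_def)
  have out: "\<forall>i. i \<notin> {1..3} \<longrightarrow> c3 i = i" by (auto simp: c3_def)
  have mem: "\<And>k. (c3^^k) 1 \<in> {1,2,3}"
  proof -
    fix k show "(c3^^k) 1 \<in> {1,2,3}" by (induction k) (auto intro!: c3_in simp del: insert_iff)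
  qed
  have it: "(c3^^0) 1 = 1" "(c3^^1) 1 = 2" "(c3^^2) 1 = 3"
    by (simp_all add: funpow_num funpow_one)
  have "{(c3 ^^ k) 1 | k. True} = {1,2,3}"
  proof
    show "{(c3 ^^ k) 1 | k. True} \<subseteq> {1,2,3}" using mem by blast
    show "{1,2,3} \<subseteq> {(c3 ^^ k) 1 | k. True}"
    proof
      fix y :: nat assume "y \<in> {1,2,3}"
      hence "y = (c3^^0) 1 \<or> y = (c3^^1) 1 \<or> y = (c3^^2) 1" using it by auto
      thus "y \<in> {(c3 ^^ k) 1 | k. True}" by blast
    qed
  qed
  thus ?thesis using bij out unfolding cyclic_pattern_def three by simp
qed

lemma orho3: "orho 3 c3 = 1/3"
proof -
  have "{i \<in> {1,2,3}. (real (c3 i) - real i) * (real (c3 (c3 i)) - real (c3 i)) < 0} = {2,3::nat}"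
    by auto
  hence "sign_changes 3 c3 = 2" by (simp add: sign_changes_def three)
  thus ?thesis by (simp add: orho_def)
qed

lemma force6:
  assumes eq: "\<And>i. i \<in> {1..6} \<Longrightarrow> sg i = pi6 i"
  shows "forces 6 sg 3 c3"
  unfolding forces_def
proof (intro allI impI)
  fix a b :: real and f :: "real \<Rightarrow> real"
  assume ab: "a \<le> b" and cf: "continuous_on {a..b} f" and fab: "f ` {a..b} \<subseteq> {a..b}"
    and hc: "has_cycle_pattern a b f 6 sg"
  then obtain e where sm: "strict_mono_on {1..6} e"
    and ee: "\<And>i. i \<in> {1..6} \<Longrightarrow> e i \<in> {a..b} \<and> f (e i) = e (sg i)"
    unfolding has_cycle_pattern_def by blast
  have ord: "e 1 < e 2" "e 2 < e 3" "e 3 < e 4" "e 4 < e 5" "e 5 < e 6"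
    by (rule strict_mono_onD[OF sm]; simp)+
  have fe: "f (e 1) = e 2" "f (e 2) = e 4" "f (e 3) = e 6" "f (e 4) = e 5" "f (e 5) = e 3" "f (e 6) = e 1"
    using ee eq by (simp_all add: eq)
  have inab: "e 1 \<ge> a" "e 6 \<le> b" using ee[of 1] ee[of 6] by auto
  have cs: "\<And>u v. a \<le> u \<Longrightarrow> v \<le> b \<Longrightarrow> continuous_on {u..v} f"
    using cf by (auto intro: continuous_on_subset)
  obtain s t where st: "e 5 \<le> s" "s \<le> t" "t \<le> e 6" "f ` {s..t} \<subseteq> {e 1..e 2}"
    "(f s = e 1 \<and> f t = e 2) \<or> (f s = e 2 \<and> f t = e 1)"
    using cover[of "e 5" "e 6" f "e 1" "e 2"] ord fe inab cs[of "e 5" "e 6"] by auto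
  obtain s2 t2 where st2: "e 2 \<le> s2" "s2 \<le> t2" "t2 \<le> e 3" "f ` {s2..t2} \<subseteq> {s..t}"
    "(f s2 = s \<and> f t2 = t) \<or> (f s2 = t \<and> f t2 = s)"
    using cover[of "e 2" "e 3" f s t] ord fe inab cs[of "e 2" "e 3"] st by auto
  obtain p q where pq: "e 1 \<le> p" "p \<le> q" "q \<le> e 2" "f ` {p..q} \<subseteq> {s2..t2}"
    "(f p = s2 \<and> f q = t2) \<or> (f p = t2 \<and> f q = s2)"
    using cover[of "e 1" "e 2" f s2 t2] ord fe inab cs[of "e 1" "e 2"] st2 by auto
  have gpq: "(f (f (f p)) = e 1 \<and> f (f (f q)) = e 2) \<or> (f (f (f p)) = e 2 \<and> f (f (f q)) = e 1)"
    using pq(5) st2(5) st(5) by auto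
  have c2: "continuous_on {a..b} (\<lambda>x. f (f x))" by (rule continuous_on_compose2[OF cf cf fab])
  have fab2: "(\<lambda>x. f (f x)) ` {a..b} \<subseteq> {a..b}" using fab by auto
  have c3': "continuous_on {a..b} (\<lambda>x. f (f (f x)))" by (rule continuous_on_compose2[OF cf c2 fab2])
  have "continuous_on {a..b} (\<lambda>x. f (f (f x)) - x)" using c3' by (intro continuous_intros)
  hence ch: "continuous_on {p..q} (\<lambda>x. f (f (f x)) - x)"
    using pq inab ord by (auto intro: continuous_on_subset)
  obtain x where x: "p \<le> x" "x \<le> q" "f (f (f x)) - x = 0"
  proof -
    from gpq show ?thesis
    proof
      assume h: "f (f (f p)) = e 1 \<and> f (f (f q)) = e 2"
      have "\<exists>x. p \<le> x \<and> x \<le> q \<and> f (f (f x)) - x = 0"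
        by (rule IVT'[OF _ _ pq(2) ch]) (use h pq in auto)
      thus ?thesis using that by blast
    next
      assume h: "f (f (f p)) = e 2 \<and> f (f (f q)) = e 1"
      have "\<exists>x. p \<le> x \<and> x \<le> q \<and> f (f (f x)) - x = 0"
        by (rule IVT2'[OF _ _ pq(2) ch]) (use h pq in auto)
      thus ?thesis using that by blast
    qed
  qed
  have fx: "f x \<in> {s2..t2}" using pq(4) x(1,2) by (auto simp: image_subset_iff)
  have ffx: "f (f x) \<in> {s..t}" using st2(4) fx by (auto simp: image_subset_iff)
  have fffx: "f (f (f x)) = x" using x by auto
  have lt1: "x < f x"
  proof (rule ccontr)
    assume "\<not> x < f x"
    hence "x = e 2" "f x = e 2" using fx x pq st2 by auto
    hence "f x = e 4" using fe by simp
    thus False using fx st2 ord \<open>f x = e 2\<close> by auto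
  qed
  have lt2: "f x < f (f x)" using fx ffx st st2 ord by auto
  define e' where "e' = (\<lambda>i::nat. if i = 1 then x else if i = 2 then f x else f (f x))"
  have "strict_mono_on {1..3} e'"
  proof (rule strict_mono_onI)
    fix r s' :: nat assume "r \<in> {1..3}" "s' \<in> {1..3}" "r < s'"
    hence "(r = 1 \<and> s' = 2) \<or> (r = 1 \<and> s' = 3) \<or> (r = 2 \<and> s' = 3)" by auto
    thus "e' r < e' s'" using lt1 lt2 unfolding e'_def by auto
  qed
  moreover have "\<forall>i\<in>{1..3}. e' i \<in> {a..b} \<and> f (e' i) = e' (c3 i)"
  proof
    fix i :: nat assume "i \<in> {1..3}"
    hence "i = 1 \<or> i = 2 \<or> i = 3" by auto
    moreover have "x \<in> {a..b}" "f x \<in> {a..b}" "f (f x) \<in> {a..b}"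
      using x pq st st2 ord inab fx ffx by auto
    ultimately show "e' i \<in> {a..b} \<and> f (e' i) = e' (c3 i)"
      unfolding e'_def using fffx by auto
  qed
  ultimately show "has_cycle_pattern a b f 3 c3" unfolding has_cycle_pattern_def by blast
qed

lemma three_blocks:
  fixes S0 S1 S2 :: "nat set"
  assumes c: "c \<in> S0" "c \<in> {1..6}"
    and m01: "\<And>x. x \<in> S0 \<Longrightarrow> pi6 x \<in> S1"
    and m12: "\<And>x. x \<in> S1 \<Longrightarrow> pi6 x \<in> S2"
    and m20: "\<And>x. x \<in> S2 \<Longrightarrow> pi6 x \<in> S0"
    and v0: "\<And>a b i. a \<in> S0 \<Longrightarrow> b \<in> S0 \<Longrightarrow> a \<le> i \<Longrightarrow> i \<le> b \<Longrightarrow> i \<in> S0"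
    and v1: "\<And>a b i. a \<in> S1 \<Longrightarrow> b \<in> S1 \<Longrightarrow> a \<le> i \<Longrightarrow> i \<le> b \<Longrightarrow> i \<in> S1"
    and d01: "S0 \<inter> S1 = {}" and d12: "S1 \<inter> S2 = {}"
  shows False
proof -
  have "c = 1 \<or> c = 2 \<or> c = 3 \<or> c = 4 \<or> c = 5 \<or> c = 6" using c(2) by auto
  thus False
  proof (elim disjE)
    assume "c = 1"
    hence "2 \<in> S1" "5 \<in> S0" "1 \<in> S0" using c(1) m01[of 1] m12[of 2] m20[of 4] by auto
    moreover hence "2 \<in> S0" using v0[of 1 5 2] by auto
    ultimately show False using d01 by blast
  next
    assume "c = 5"
    hence "3 \<in> S1" "1 \<in> S0" "5 \<in> S0" using c(1) m01[of 5] m12[of 3] m20[of 6] by auto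
    moreover hence "3 \<in> S0" using v0[of 1 5 3] by auto
    ultimately show False using d01 by blast
  next
    assume "c = 2"
    hence "4 \<in> S1" "5 \<in> S2" "3 \<in> S0" using c(1) m01[of 2] m12[of 4] m20[of 5] by auto
    moreover hence "6 \<in> S1" using m01[of 3] by auto
    moreover hence "5 \<in> S1" using v1[of 4 6 5] calculation by auto
    ultimately show False using d12 by blast
  next
    assume "c = 3"
    hence "6 \<in> S1" "1 \<in> S2" "2 \<in> S0" using c(1) m01[of 3] m12[of 6] m20[of 1] by auto
    moreover hence "4 \<in> S1" using m01[of 2] by auto
    moreover hence "5 \<in> S2" using m12[of 4] by auto
    moreover have "5 \<in> S1" using v1[of 4 6 5] calculation by auto
    ultimately show False using d12 by blast
  next
    assume "c = 4"
    hence "5 \<in> S1" "6 \<in> S0" "4 \<in> S0" using c(1) m01[of 4] m12[of 5] m20[of 3] by auto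
    moreover hence "5 \<in> S0" using v0[of 4 6 5] by auto
    ultimately show False using d01 by blast
  next
    assume "c = 6"
    hence "1 \<in> S1" "4 \<in> S0" "6 \<in> S0" using c(1) m01[of 6] m12[of 1] m20[of 2] by auto
    moreover hence "5 \<in> S0" using v0[of 4 6 5] by auto
    moreover have "5 \<in> S1" using m01[of 4] calculation by auto
    ultimately show False using d01 by blast
  qed
qed

lemma rank:
  fixes g :: "nat \<Rightarrow> nat"
  assumes bij: "bij_betw g {0..5} {1..6}" and j: "j \<le> 5"
  shows "g j = card {j' \<in> {0..5}. g j' < g j} + 1"
proof -
  have inj: "inj_on g {0..5}" and im: "g ` {0..5} = {1..6}" using bij by (auto simp: bij_betw_def)
  have gj: "g j \<in> {1..6}" using im j by auto
  have "g ` {j' \<in> {0..5}. g j' < g j} = {y \<in> {1..6}. y < g j}"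
  proof
    show "g ` {j' \<in> {0..5}. g j' < g j} \<subseteq> {y \<in> {1..6}. y < g j}" using im by auto
    show "{y \<in> {1..6}. y < g j} \<subseteq> g ` {j' \<in> {0..5}. g j' < g j}"
    proof
      fix y assume y: "y \<in> {y \<in> {1..6}. y < g j}"
      then obtain j' where "j' \<in> {0..5}" "y = g j'" using im by (metis (no_types, lifting) imageE mem_Collect_eq)
      thus "y \<in> g ` {j' \<in> {0..5}. g j' < g j}" using y by auto
    qed
  qed
  also have "\<dots> = {1..<g j}" using gj by auto
  finally have "card {j' \<in> {0..5}. g j' < g j} = card {1..<g j}"
    using card_image[of g "{j' \<in> {0..5}. g j' < g j}"] inj_on_subset[OF inj] by (metis (no_types, lifting) mem_Collect_eq subsetI)
  thus ?thesis using gj by auto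
qed

definition Bf :: "nat \<Rightarrow> (nat \<Rightarrow> real) \<Rightarrow> (nat \<Rightarrow> real) \<Rightarrow> nat \<Rightarrow> nat set" where
  "Bf n lo hi j = {i \<in> {1..n}. lo j \<le> real i \<and> real i \<le> hi j}"

lemma bs_elim:
  assumes "block_structure n pp k sg"
  obtains lo hi r where "1 \<le> k"
   "\<forall>j\<le>k. lo j \<le> hi j \<and> Bf n lo hi j \<noteq> {}"
   "\<forall>j\<le>k. \<forall>j'\<le>k. j \<noteq> j' \<longrightarrow> {lo j..hi j} \<inter> {lo j'..hi j'} = {}"
   "\<forall>j<k. pp ` Bf n lo hi j = Bf n lo hi (Suc j)" "pp ` Bf n lo hi k = Bf n lo hi 0"
   "cyclic_pattern (k+1) sg" "bij_betw r {0..k} {1..k+1}"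
   "\<forall>j\<le>k. \<forall>j'\<le>k. r j < r j' \<longleftrightarrow> hi j < lo j'"
   "\<forall>j\<le>k. sg (r j) = r (if j = k then 0 else Suc j)"
  using assms unfolding block_structure_def Let_def Bf_def
  apply (elim conjE exE)
  apply (rule that[unfolded Bf_def])
  apply assumption+
  done

lemma conv: "a \<in> Bf n lo hi j \<Longrightarrow> b \<in> Bf n lo hi j \<Longrightarrow> a \<le> i \<Longrightarrow> i \<le> b \<Longrightarrow> i \<in> Bf n lo hi j"
  unfolding Bf_def by auto

lemma no_block:
  assumes bs: "block_structure 6 pi6 k sg" and ot: "over_twist (k+1) sg" and oh: "orho (k+1) sg = 1/3"
  shows False
proof -
  obtain lo hi r where k1: "1 \<le> k"
   and nb: "\<forall>j\<le>k. lo j \<le> hi j \<and> Bf 6 lo hi j \<noteq> {}"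
   and di: "\<forall>j\<le>k. \<forall>j'\<le>k. j \<noteq> j' \<longrightarrow> {lo j..hi j} \<inter> {lo j'..hi j'} = {}"
   and im: "\<forall>j<k. pi6 ` Bf 6 lo hi j = Bf 6 lo hi (Suc j)" and imk: "pi6 ` Bf 6 lo hi k = Bf 6 lo hi 0"
   and cp: "cyclic_pattern (k+1) sg" and rb: "bij_betw r {0..k} {1..k+1}"
   and ro: "\<forall>j\<le>k. \<forall>j'\<le>k. r j < r j' \<longleftrightarrow> hi j < lo j'"
   and sr: "\<forall>j\<le>k. sg (r j) = r (if j = k then 0 else Suc j)"
    by (rule bs_elim[OF bs])
  define B where "B = Bf 6 lo hi"
  have Bsub: "B j \<subseteq> {1..6}" for j unfolding B_def Bf_def by auto
  have Bfin: "finite (B j)" for j using Bsub finite_subset by blast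
  have Bne: "j \<le> k \<Longrightarrow> B j \<noteq> {}" for j using nb unfolding B_def by auto
  have dj: "j \<le> k \<Longrightarrow> j' \<le> k \<Longrightarrow> j \<noteq> j' \<Longrightarrow> B j \<inter> B j' = {}" for j j'
  proof -
    assume a: "j \<le> k" "j' \<le> k" "j \<noteq> j'"
    show "B j \<inter> B j' = {}"
    proof (rule ccontr)
      assume "B j \<inter> B j' \<noteq> {}"
      then obtain i where "i \<in> B j" "i \<in> B j'" by blast
      hence "real i \<in> {lo j..hi j} \<inter> {lo j'..hi j'}" unfolding B_def Bf_def by auto
      thus False using di a by blast
    qed
  qed
  have cardU: "card (\<Union>j\<in>{..k}. B j) = (\<Sum>j\<in>{..k}. card (B j))"
  proof (rule card_UN_disjoint)
    show "finite {..k}" by simp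
    show "\<forall>i\<in>{..k}. finite (B i)" using Bfin by blast
    show "\<forall>i\<in>{..k}. \<forall>j\<in>{..k}. i \<noteq> j \<longrightarrow> B i \<inter> B j = {}" using dj by (metis atMost_iff)
  qed
  have "(\<Union>j\<in>{..k}. B j) \<subseteq> {1..6}" using Bsub by (simp add: UN_least)
  hence "card (\<Union>j\<in>{..k}. B j) \<le> card {1..6::nat}" by (rule card_mono[rotated]) simp
  hence cle: "(\<Sum>j\<in>{..k}. card (B j)) \<le> 6" using cardU by simp
  have cge1: "card (B j) \<ge> 1" if "j \<le> k" for j
    using Bne[OF that] Bfin[of j] by (simp add: One_nat_def Suc_le_eq card_gt_0_iff)
  have "(\<Sum>j\<in>{..k}. (1::nat)) \<le> (\<Sum>j\<in>{..k}. card (B j))" using cge1 by (intro sum_mono) auto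
  hence kle: "k \<le> 5" using cle by simp
  obtain sc where sc: "sign_changes (k+1) sg = sc" by blast
  have "real sc / (2 * real (k+1)) = 1/3" using oh sc by (simp add: orho_def)
  hence "3 * real sc = 2 * real (k+1)" by (simp add: field_simps)
  hence sc3: "3 * sc = 2 * (k+1)" by linarith
  have "k = 2 \<or> k = 5" using k1 kle sc3 by presburger
  thus False
  proof
    assume k2: "k = 2"
    obtain c where c: "c \<in> B 0" using Bne[of 0] by blast
    show False
    proof (rule three_blocks[of c "B 0" "B 1" "B 2"])
      show "c \<in> B 0" by (rule c)
      show "c \<in> {1..6}" using c Bsub by blast
      have i0: "pi6 ` B 0 = B 1" using im[rule_format, of 0] k2 unfolding B_def by (simp add: One_nat_def)
      have i1: "pi6 ` B 1 = B 2" using im[rule_format, of 1] k2 unfolding B_def by (simp add: numeral_2_eq_2 One_nat_def)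
      have i2: "pi6 ` B 2 = B 0" using imk k2 unfolding B_def by simp
      show "\<And>x. x \<in> B 0 \<Longrightarrow> pi6 x \<in> B 1" using i0 by blast
      show "\<And>x. x \<in> B 1 \<Longrightarrow> pi6 x \<in> B 2" using i1 by blast
      show "\<And>x. x \<in> B 2 \<Longrightarrow> pi6 x \<in> B 0" using i2 by blast
      show "\<And>a b i. a \<in> B 0 \<Longrightarrow> b \<in> B 0 \<Longrightarrow> a \<le> i \<Longrightarrow> i \<le> b \<Longrightarrow> i \<in> B 0"
        unfolding B_def by (rule conv)
      show "\<And>a b i. a \<in> B 1 \<Longrightarrow> b \<in> B 1 \<Longrightarrow> a \<le> i \<Longrightarrow> i \<le> b \<Longrightarrow> i \<in> B 1"
        unfolding B_def by (rule conv)
      show "B 0 \<inter> B 1 = {}" using dj k2 by auto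
      show "B 1 \<inter> B 2 = {}" using dj k2 by auto
    qed
  next
    assume k5: "k = 5"
    have sum6: "(\<Sum>j\<in>{..5}. card (B j)) \<le> 6" using cle k5 by simp
    have c1: "card (B j) = 1" if "j \<le> 5" for j
    proof -
      have "(\<Sum>j\<in>{..5}. card (B j)) = card (B j) + (\<Sum>i\<in>{..5}-{j}. card (B i))"
        using that by (simp add: sum.remove)
      moreover have "(\<Sum>i\<in>{..5}-{j}. card (B i)) \<ge> (\<Sum>i\<in>{..5}-{j}. (1::nat))"
        using cge1 k5 by (intro sum_mono) auto
      moreover have "card ({..5::nat}-{j}) = 5" using that by simp
      hence "(\<Sum>i\<in>{..5}-{j}. (1::nat)) = 5" by simp
      ultimately have "card (B j) \<le> 1" using sum6 by linarith
      thus ?thesis using cge1[of j] that k5 by simp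
    qed
    define b where "b j = the_elem (B j)" for j
    have Bb: "B j = {b j}" if "j \<le> 5" for j
      using c1[OF that] unfolding b_def by (metis card_1_singletonE the_elem_eq)
    have b16: "b j \<in> {1..6}" if "j \<le> 5" for j using Bb[OF that] Bsub[of j] by auto
    have pb: "pi6 (b j) = b (Suc j)" if "j < 5" for j
    proof -
      have "pi6 ` B j = B (Suc j)" using im that k5 unfolding B_def by simp
      thus ?thesis using Bb[of j] Bb[of "Suc j"] that by simp
    qed
    have pb5: "pi6 (b 5) = b 0"
    proof -
      have "pi6 ` B 5 = B 0" using imk k5 unfolding B_def by simp
      thus ?thesis using Bb[of 5] Bb[of 0] by simp
    qed
    have binj: "inj_on b {0..5}"
    proof (rule inj_onI)
      fix j j' assume jj: "j \<in> {0..5}" "j' \<in> {0..5}" "b j = b j'"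
      show "j = j'"
      proof (rule ccontr)
        assume "j \<noteq> j'"
        hence "B j \<inter> B j' = {}" using dj jj k5 by simp
        thus False using Bb[of j] Bb[of j'] jj by simp
      qed
    qed
    have bsub: "b ` {0..5} \<subseteq> {1..6}" using b16 by auto
    have "card (b ` {0..5}) = card {1..6::nat}" using card_image[OF binj] by simp
    hence bim: "b ` {0..5} = {1..6}" using card_subset_eq[OF _ bsub] by simp
    have bbij: "bij_betw b {0..5} {1..6}" by (simp add: bij_betw_def binj bim)
    have rbij: "bij_betw r {0..5} {1..6}" using rb k5 by simp
    have lohi: "lo j \<le> real (b j) \<and> real (b j) \<le> hi j" if "j \<le> 5" for j
    proof -
      have "b j \<in> B j" using Bb[OF that] by simp
      thus ?thesis unfolding B_def Bf_def by simp
    qed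
    have ordeq: "r j < r j' \<longleftrightarrow> b j < b j'" if jj: "j \<le> 5" "j' \<le> 5" for j j'
    proof
      assume "r j < r j'" hence "hi j < lo j'" using ro jj k5 by auto
      hence "real (b j) < real (b j')" using lohi[OF jj(1)] lohi[OF jj(2)] by linarith
      thus "b j < b j'" by simp
    next
      assume lt: "b j < b j'"
      hence ne: "j \<noteq> j'" by auto
      have dis: "{lo j..hi j} \<inter> {lo j'..hi j'} = {}" using di jj k5 ne by auto
      have rl: "real (b j) < real (b j')" using lt by simp
      have "hi j < lo j'"
      proof (rule ccontr)
        assume a: "\<not> hi j < lo j'"
        define z where "z = max (lo j) (lo j')"
        have "z \<in> {lo j..hi j} \<inter> {lo j'..hi j'}"
          using a lohi[OF jj(1)] lohi[OF jj(2)] rl unfolding z_def by auto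
        thus False using dis by blast
      qed
      thus "r j < r j'" using ro jj k5 by auto
    qed
    have rb_eq: "r j = b j" if "j \<le> 5" for j
    proof -
      have "{j'\<in>{0..5}. r j' < r j} = {j'\<in>{0..5}. b j' < b j}" using ordeq that by auto
      thus ?thesis using rank[OF rbij that] rank[OF bbij that] by simp
    qed
    have sgeq: "sg i = pi6 i" if "i \<in> {1..6}" for i
    proof -
      have "i \<in> b ` {0..5}" using bim that by simp
      then obtain j where j: "j \<in> {0..5}" "i = b j" by blast
      have jl: "j \<le> 5" using j by simp
      have s1: "sg (r j) = r (if j = 5 then 0 else Suc j)" using sr jl k5 by simp
      show ?thesis
      proof (cases "j = 5")
        case True
        hence "sg (r 5) = r 0" using s1 by simp
        hence "sg (b 5) = b 0" using rb_eq[of 5] rb_eq[of 0] by simp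
        thus ?thesis using pb5 j True by simp
      next
        case False
        hence jl5: "j < 5" using jl by simp
        hence "sg (r j) = r (Suc j)" using s1 by simp
        hence "sg (b j) = b (Suc j)" using rb_eq[of j] rb_eq[of "Suc j"] jl5 by simp
        thus ?thesis using pb[OF jl5] j by simp
      qed
    qed
    have fo: "forces 6 sg 3 c3" by (rule force6[OF sgeq])
    have ot6: "over_twist 6 sg" using ot k5 by simp
    have o6: "orho 6 sg = 1/3" using oh k5 by simp
    have "\<forall>m B. cyclic_pattern m B \<and> 2 \<le> m \<and> orho m B = orho 6 sg \<and> forces 6 sg m B
            \<longrightarrow> m = 6 \<and> B = sg" using ot6 unfolding over_twist_def by blast
    hence "cyclic_pattern 3 c3 \<and> 2 \<le> (3::nat) \<and> orho 3 c3 = orho 6 sg \<and> forces 6 sg 3 c3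
            \<longrightarrow> (3::nat) = 6 \<and> c3 = sg" by blast
    moreover have "orho 3 c3 = orho 6 sg" using orho3 o6 by simp
    moreover have "2 \<le> (3::nat)" by simp
    ultimately have "(3::nat) = 6" using cyc3 fo by blast
    thus False by simp
  qed
qed

theorem mainTheorem8:
  shows "cyclic_pattern 6 pi6 \<and> unimodal 6 pi6 \<and> over_rotation_pair 6 pi6 2 6 \<and>
         code_nondecreasing 6 pi6 \<and> r_pat 6 pi6 = 1/3 \<and> orho 6 pi6 = 1/3 \<and>
         \<not> (\<exists>k sg. block_structure 6 pi6 k sg \<and> over_twist (k + 1) sg \<and>
                      orho (k + 1) sg = 1/3) \<and>
         very_badly_ordered 6 pi6"
proof -
  have nb: "\<not> (\<exists>k sg. block_structure 6 pi6 k sg \<and> over_twist (k + 1) sg \<and>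
                      orho (k + 1) sg = 1/3)" using no_block by blast
  have vb: "very_badly_ordered 6 pi6"
    unfolding very_badly_ordered_def orho6 rpat6 using nb by simp
  show ?thesis using cyc6 unimodal6 orp codend rpat6 orho6 nb vb by blast
qed

end
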